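(* Let $A$ be a real $n\times n$ matrix with $n\ge2$ and strictly negative diagonal entries. If $A$ is stable, then some $2\times2$ principal submatrix of $A$ is stable.
   Context: A square matrix is stable if all its eigenvalues have strictly negative real part. A principal submatrix is obtained by restricting rows and columns to the same index set. *)

theory Defs
  imports Complex_Main "Jordan_Normal_Form.Char_Poly" "Jordan_Normal_Form.DL_Submatrix"
begin

definition stable_mat :: "real mat \<Rightarrow> bool" where
  "stable_mat A \<longleftrightarrow> (\<forall>z::complex. eigenvalue (map_mat complex_of_real A) z \<longrightarrow> Re z < 0)"

end

theory Submission imports Defs "Jordan_Normal_Form.Schur_Decomposition" begin

definition tr :: "'a::comm_ring_1 mat \<Rightarrow> 'a" where
  "tr M = (\<Sum>i<dim_row M. M $$ (i,i))"

lemma tr_comm: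
  fixes X Y :: "'a::comm_ring_1 mat"
  assumes "X \<in> carrier_mat n m" "Y \<in> carrier_mat m n"
  shows "tr (X * Y) = tr (Y * X)"
proof -
  have "tr (X * Y) = (\<Sum>i<n. \<Sum>k<m. X $$ (i,k) * Y $$ (k,i))"
    unfolding tr_def using assms
    by (auto simp: scalar_prod_def atLeast0LessThan intro!: sum.cong)
  also have "\<dots> = (\<Sum>k<m. \<Sum>i<n. Y $$ (k,i) * X $$ (i,k))"
    by (subst sum.swap) (simp add: mult.commute)
  also have "\<dots> = tr (Y * X)"
    unfolding tr_def using assms
    by (auto simp: scalar_prod_def atLeast0LessThan intro!: sum.cong)
  finally show ?thesis .
qed

lemma tr_sim:
  fixes B P Q :: "'a::comm_ring_1 mat"
  assumes "B \<in> carrier_mat n n" "P \<in> carrier_mat n n" "Q \<in> carrier_mat n n" "Q * P = 1\<^sub>m n"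
  shows "tr (P * B * Q) = tr B"
proof -
  have "tr (P * B * Q) = tr (P * (B * Q))" using assms by simp
  also have "\<dots> = tr ((B * Q) * P)" using assms by (intro tr_comm[of _ n n]) auto
  also have "\<dots> = tr (B * (Q * P))" using assms by simp
  also have "\<dots> = tr B" using assms by simp
  finally show ?thesis .
qed

lemma tr_upper_sq:
  fixes B :: "'a::comm_ring_1 mat"
  assumes "B \<in> carrier_mat n n" "upper_triangular B"
  shows "tr (B * B) = (\<Sum>i<n. B $$ (i,i) ^ 2)"
proof -
  have "tr (B * B) = (\<Sum>i<n. \<Sum>k<n. B $$ (i,k) * B $$ (k,i))"
    unfolding tr_def using assms
    by (auto simp: scalar_prod_def atLeast0LessThan intro!: sum.cong)
  also have "\<dots> = (\<Sum>i<n. B $$ (i,i) ^ 2)"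
  proof (rule sum.cong[OF refl])
    fix i assume i: "i \<in> {..<n}"
    have "(\<Sum>k<n. B $$ (i,k) * B $$ (k,i)) = (\<Sum>k\<in>{i}. B $$ (i,k) * B $$ (k,i))"
    proof (rule sum.mono_neutral_right)
      show "\<forall>k\<in>{..<n} - {i}. B $$ (i, k) * B $$ (k, i) = 0"
      proof
        fix k assume k: "k \<in> {..<n} - {i}"
        show "B $$ (i, k) * B $$ (k, i) = 0"
        proof (cases "k < i")
          case True then show ?thesis using assms i unfolding upper_triangular_def by auto
        next
          case False then have "i < k" using k by auto
          then show ?thesis using assms k unfolding upper_triangular_def by auto
        qed
      qed
    qed (use i in auto)
    then show "(\<Sum>k<n. B $$ (i,k) * B $$ (k,i)) = B $$ (i,i) ^ 2" by (simp add: power2_eq_square)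
  qed
  finally show ?thesis .
qed

lemma sq_sum_neg:
  fixes xs :: "real list"
  assumes "\<forall>x\<in>set xs. x < 0"
  shows "sum_list (map (\<lambda>x. x^2) xs) \<le> (sum_list xs)^2 \<and> (length xs \<ge> 2 \<longrightarrow> sum_list (map (\<lambda>x. x^2) xs) < (sum_list xs)^2)"
  using assms
proof (induction xs)
  case Nil then show ?case by simp
next
  case (Cons x xs)
  have s: "sum_list xs \<le> 0" using Cons.prems by (induction xs) (auto intro: add_nonpos_nonpos)
  have s2: "xs \<noteq> [] \<Longrightarrow> sum_list xs < 0" using Cons.prems
    by (induction xs) (auto, smt (verit) sum_list_nonpos)
  have x: "x < 0" using Cons.prems by auto
  have IH: "sum_list (map (\<lambda>x. x^2) xs) \<le> (sum_list xs)^2" using Cons by auto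
  have e: "(x + sum_list xs)^2 = x^2 + 2*(x * sum_list xs) + (sum_list xs)^2" by (simp add: power2_eq_square algebra_simps)
  have "0 \<le> x * sum_list xs" using x s by (simp add: mult_nonpos_nonpos)
  moreover have "xs \<noteq> [] \<Longrightarrow> 0 < x * sum_list xs" using x s2 by (simp add: mult_neg_neg)
  ultimately show ?case using IH e by (cases xs) auto
qed

lemma quad_root_re:
  fixes z :: complex and t d :: real
  assumes "z^2 - of_real t * z + of_real d = 0" "t < 0" "d > 0"
  shows "Re z < 0"
proof -
  obtain x y where z: "z = Complex x y" by (cases z)
  have re: "x^2 - y^2 - t*x + d = 0" and im: "2*x*y - t*y = 0"
    using assms(1) unfolding z complex_eq_iff
    by (auto simp: power2_eq_square algebra_simps)
  show ?thesis
  proof (cases "y = 0")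
    case True
    with re have "x^2 - t*x + d = 0" by simp
    then show ?thesis using assms(2,3) z
      by (smt (verit, best) mult_nonneg_nonpos2 zero_le_power2 complex.sel(1))
  next
    case False
    with im have "2*x - t = 0" by (metis mult.commute mult_cancel_left right_diff_distrib' mult_zero_right diff_self eq_iff_diff_eq_0 mult.assoc)
    then show ?thesis using z assms(2) by simp
  qed
qed

lemma stable_2:
  fixes A :: "real mat"
  assumes A: "A \<in> carrier_mat n n" and ij: "i < j" "j < n"
    and d: "A $$ (i,i) < 0" "A $$ (j,j) < 0"
    and det: "A $$ (i,i) * A $$ (j,j) - A $$ (i,j) * A $$ (j,i) > 0"
  shows "stable_mat (submatrix A {i,j} {i,j})"
proof -
  let ?I = "{i,j}"
  have cI: "{x. x < dim_row A \<and> x \<in> ?I} = ?I" "{x. x < dim_col A \<and> x \<in> ?I} = ?I" using A ij by auto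
  have c2: "card ?I = 2" using ij by auto
  have p0: "pick ?I 0 = i"
  proof -
    have "{a\<in>?I. a < i} = {}" using ij by auto
    then have "card {a\<in>?I. a < i} = 0" by simp
    then show ?thesis using pick_card_in_set[of i ?I] by (metis insertI1)
  qed
  have p1: "pick ?I 1 = j"
  proof -
    have "{a\<in>?I. a < j} = {i}" using ij by auto
    then have "card {a\<in>?I. a < j} = 1" by simp
    then show ?thesis using pick_card_in_set[of j ?I] by (metis insertI1 insertI2)
  qed
  define M where "M = submatrix A ?I ?I"
  have Mc: "M \<in> carrier_mat 2 2" unfolding M_def carrier_mat_def mem_Collect_eq dim_submatrix cI c2 by simp
  have M00: "M $$ (0,0) = A $$ (i,i)" and M01: "M $$ (0,1) = A $$ (i,j)"
   and M10: "M $$ (1,0) = A $$ (j,i)" and M11: "M $$ (1,1) = A $$ (j,j)"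
  proof -
    have h: "\<And>a b. a < 2 \<Longrightarrow> b < 2 \<Longrightarrow> M $$ (a,b) = A $$ (pick ?I a, pick ?I b)"
      unfolding M_def by (rule submatrix_index) (simp_all only: cI c2)
    have "M $$ (0,0) = A $$ (pick ?I 0, pick ?I 0)" by (rule h) auto
    then show "M $$ (0,0) = A $$ (i,i)" unfolding p0 .
    have "M $$ (0,1) = A $$ (pick ?I 0, pick ?I 1)" by (rule h) auto
    then show "M $$ (0,1) = A $$ (i,j)" unfolding p0 p1 .
    have "M $$ (1,0) = A $$ (pick ?I 1, pick ?I 0)" by (rule h) auto
    then show "M $$ (1,0) = A $$ (j,i)" unfolding p0 p1 .
    have "M $$ (1,1) = A $$ (pick ?I 1, pick ?I 1)" by (rule h) auto
    then show "M $$ (1,1) = A $$ (j,j)" unfolding p1 .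
  qed
  let ?a = "A $$ (i,i)" and ?b = "A $$ (i,j)" and ?c = "A $$ (j,i)" and ?d = "A $$ (j,j)"
  show ?thesis unfolding stable_mat_def M_def[symmetric]
  proof (intro allI impI)
    fix z :: complex
    assume "eigenvalue (map_mat complex_of_real M) z"
    then obtain v where v: "v \<in> carrier_vec 2" "v \<noteq> 0\<^sub>v 2"
      and ev: "map_mat complex_of_real M *\<^sub>v v = z \<cdot>\<^sub>v v"
      unfolding eigenvalue_def eigenvector_def using Mc by auto
    have e0: "of_real ?a * v$0 + of_real ?b * v$1 = z * v$0"
      using arg_cong[OF ev, of "\<lambda>w. w $ 0"] Mc v M00 M01
      by (simp add: scalar_prod_def numeral_2_eq_2)
    have e1: "of_real ?c * v$0 + of_real ?d * v$1 = z * v$1"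
      using arg_cong[OF ev, of "\<lambda>w. w $ 1"] Mc v M10 M11
      by (simp add: scalar_prod_def numeral_2_eq_2)
    let ?p = "z^2 - of_real (?a + ?d) * z + of_real (?a*?d - ?b*?c)"
    have q0: "?p * v$0 = 0"
    proof -
      have "(of_real ?a - z) * v$0 = - of_real ?b * v$1" using e0 by (simp add: algebra_simps)
      moreover have "(of_real ?d - z) * v$1 = - of_real ?c * v$0" using e1 by (simp add: algebra_simps)
      ultimately have "(of_real ?a - z) * (of_real ?d - z) * v$0 = of_real ?b * of_real ?c * v$0"
        by (metis (no_types, lifting) mult.assoc mult.commute mult_minus_left minus_mult_minus)
      then show ?thesis by (simp add: power2_eq_square algebra_simps)
    qed
    have q1: "?p * v$1 = 0"
    proof -
      have "(of_real ?a - z) * v$0 = - of_real ?b * v$1" using e0 by (simp add: algebra_simps)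
      moreover have "(of_real ?d - z) * v$1 = - of_real ?c * v$0" using e1 by (simp add: algebra_simps)
      ultimately have "(of_real ?a - z) * (of_real ?d - z) * v$1 = of_real ?b * of_real ?c * v$1"
        by (metis (no_types, lifting) mult.assoc mult.commute mult_minus_left minus_mult_minus)
      then show ?thesis by (simp add: power2_eq_square algebra_simps)
    qed
    have "v$0 \<noteq> 0 \<or> v$1 \<noteq> 0"
    proof (rule ccontr)
      assume "\<not> ?thesis"
      then have "v = 0\<^sub>v 2" using v(1) by (intro eq_vecI) (auto simp: less_2_cases_iff)
      with v(2) show False by simp
    qed
    then have "?p = 0" using q0 q1 by auto
    then show "Re z < 0" using d det by (intro quad_root_re[of z "?a + ?d" "?a*?d - ?b*?c"]) auto
  qed
qed

theorem mainTheorem13: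
  fixes A :: "real mat" and n :: nat
  assumes "A \<in> carrier_mat n n"
    and "n \<ge> 2"
    and "\<forall>i<n. A $$ (i, i) < 0"
    and "stable_mat A"
  shows "\<exists>I. I \<subseteq> {..<n} \<and> card I = 2 \<and> stable_mat (submatrix A I I)"
proof -
  note A = assms(1)
  define C where "C = map_mat complex_of_real A"
  have Cc: "C \<in> carrier_mat n n" unfolding C_def using A by simp
  have Cij: "\<And>i j. i < n \<Longrightarrow> j < n \<Longrightarrow> C $$ (i,j) = of_real (A $$ (i,j))"
    unfolding C_def using A by simp
  obtain es where es: "char_poly C = (\<Prod>a\<leftarrow>es. [:- a, 1:])" and les: "length es = n"
    using char_poly_factorized[OF Cc] by blast
  have neg: "\<forall>e\<in>set es. Re e < 0"
  proof
    fix e assume "e \<in> set es"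
    then have "poly (char_poly C) e = 0" unfolding es poly_prod_list
      by (auto simp: prod_list_zero_iff)
    then have "eigenvalue C e" using eigenvalue_root_char_poly[OF Cc] by simp
    then show "Re e < 0" using assms(4) unfolding stable_mat_def C_def by blast
  qed
  obtain B P Q where sd: "schur_decomposition C es = (B,P,Q)" by (cases "schur_decomposition C es") auto
  from schur_decomposition[OF Cc es sd]
  have sim: "similar_mat_wit C B P Q" and ut: "upper_triangular B" and dg: "diag_mat B = es" by auto
  note w = similar_mat_witD2[OF Cc sim]
  have Bii: "\<And>i. i < n \<Longrightarrow> B $$ (i,i) = es ! i"
    using dg w(5) unfolding diag_mat_def by auto
  have trC: "tr C = sum_list es"
  proof -
    have "tr C = tr B" using w tr_sim[of B n P Q] by simp
    also have "\<dots> = (\<Sum>i<n. es ! i)" unfolding tr_def using w(5) Bii by simp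
    also have "\<dots> = sum_list es" using les by (simp add: sum_list_sum_nth atLeast0LessThan)
    finally show ?thesis .
  qed
  have trC2: "tr (C * C) = sum_list (map (\<lambda>e. e^2) es)"
  proof -
    have "C * C = P * (B * B) * Q"
    proof -
      have QPX: "Q * (P * (B * Q)) = B * Q"
      proof -
        have "Q * (P * (B * Q)) = (Q * P) * (B * Q)" by (rule assoc_mult_mat[symmetric, of Q n n P n "B*Q" n]) (use w in auto)
        also have "\<dots> = B * Q" using w by simp
        finally show ?thesis .
      qed
      have BQ: "B * Q \<in> carrier_mat n n" "P * (B * Q) \<in> carrier_mat n n" "B * B \<in> carrier_mat n n" using w by auto
      have e0: "C = P * (B * Q)" using w(3) assoc_mult_mat[of P n n B n Q n] w by simp
      have e1: "C * C = P * ((B * Q) * (P * (B * Q)))" unfolding e0 by (rule assoc_mult_mat[of P n n "B*Q" n "P * (B * Q)" n]) (use w BQ in auto)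
      have e2: "(B * Q) * (P * (B * Q)) = B * (B * Q)"
      proof -
        have "(B * Q) * (P * (B * Q)) = B * (Q * (P * (B * Q)))" by (rule assoc_mult_mat) (use w BQ in auto)
        then show ?thesis unfolding QPX .
      qed
      have e3: "P * (B * B) * Q = P * ((B * B) * Q)" by (rule assoc_mult_mat) (use w BQ in auto)
      have e4: "(B * B) * Q = B * (B * Q)" by (rule assoc_mult_mat) (use w BQ in auto)
      show ?thesis unfolding e1 e2 e3 e4 ..
    qed
    then have "tr (C * C) = tr (B * B)" using w tr_sim[of "B*B" n P Q] by simp
    also have "\<dots> = (\<Sum>i<n. (es ! i)^2)" using tr_upper_sq[OF w(5) ut] Bii by simp
    also have "\<dots> = sum_list (map (\<lambda>e. e^2) es)" using les by (simp add: sum_list_sum_nth atLeast0LessThan)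
    finally show ?thesis .
  qed
  define t where "t = (\<Sum>i<n. A $$ (i,i))"
  define s where "s = (\<Sum>i<n. \<Sum>k<n. A $$ (i,k) * A $$ (k,i))"
  have "tr C = of_real t" unfolding tr_def t_def using Cc Cij by simp
  then have t1: "t = sum_list (map Re es)" using trC
  proof -
    have "Re (sum_list es) = sum_list (map Re es)" by (induction es) auto
    then show ?thesis using \<open>tr C = of_real t\<close> trC by (metis Re_complex_of_real)
  qed
  have "tr (C * C) = of_real s" unfolding tr_def s_def using Cc Cij
    by (simp add: scalar_prod_def atLeast0LessThan)
  then have "s = Re (sum_list (map (\<lambda>e. e^2) es))" using trC2 by simp
  also have "\<dots> = sum_list (map (\<lambda>e. Re e ^2 - Im e ^2) es)"
    by (induction es) (auto simp: power2_eq_square)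
  also have "\<dots> \<le> sum_list (map (\<lambda>x. x^2) (map Re es))"
  proof (induction es)
    case (Cons a es)
    have "0 \<le> (Im a)^2" by simp
    then show ?case using Cons.IH by (simp, linarith)
  qed simp
  also have "\<dots> < t^2"
  proof -
    have "\<forall>x\<in>set (map Re es). x < 0" using neg by simp
    moreover have "length (map Re es) \<ge> 2" using les assms(2) by simp
    ultimately show ?thesis unfolding t1 using sq_sum_neg[of "map Re es"] by blast
  qed
  finally have st: "s < t^2" .
  have "t^2 - s = (\<Sum>i<n. \<Sum>k<n. A $$ (i,i) * A $$ (k,k) - A $$ (i,k) * A $$ (k,i))"
    unfolding t_def s_def power2_eq_square sum_product sum_subtractf[symmetric] by simp
  with st have "0 < (\<Sum>i<n. \<Sum>k<n. A $$ (i,i) * A $$ (k,k) - A $$ (i,k) * A $$ (k,i))" by simp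
  then obtain i k where ik: "i < n" "k < n" "A $$ (i,i) * A $$ (k,k) - A $$ (i,k) * A $$ (k,i) > 0"
  proof -
    have "\<exists>i<n. 0 < (\<Sum>k<n. A $$ (i,i) * A $$ (k,k) - A $$ (i,k) * A $$ (k,i))"
    proof (rule ccontr)
      assume h: "\<not> ?thesis"
      have "\<And>i. i \<in> {..<n} \<Longrightarrow> (\<Sum>k<n. A $$ (i,i) * A $$ (k,k) - A $$ (i,k) * A $$ (k,i)) \<le> 0"
      proof -
        fix i assume "i \<in> {..<n}"
        then show "(\<Sum>k<n. A $$ (i,i) * A $$ (k,k) - A $$ (i,k) * A $$ (k,i)) \<le> 0"
          using h not_less by blast
      qed
      then have "(\<Sum>i<n. \<Sum>k<n. A $$ (i,i) * A $$ (k,k) - A $$ (i,k) * A $$ (k,i)) \<le> 0"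
        by (rule sum_nonpos)
      with \<open>0 < (\<Sum>i<n. \<Sum>k<n. A $$ (i,i) * A $$ (k,k) - A $$ (i,k) * A $$ (k,i))\<close> show False by simp
    qed
    then obtain i where i: "i < n" "0 < (\<Sum>k<n. A $$ (i,i) * A $$ (k,k) - A $$ (i,k) * A $$ (k,i))" by blast
    have "\<exists>k<n. 0 < A $$ (i,i) * A $$ (k,k) - A $$ (i,k) * A $$ (k,i)"
    proof (rule ccontr)
      assume h: "\<not> ?thesis"
      have "\<And>k. k \<in> {..<n} \<Longrightarrow> A $$ (i,i) * A $$ (k,k) - A $$ (i,k) * A $$ (k,i) \<le> 0"
        using h not_less by blast
      then have "(\<Sum>k<n. A $$ (i,i) * A $$ (k,k) - A $$ (i,k) * A $$ (k,i)) \<le> 0"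
        by (rule sum_nonpos)
      with i show False by simp
    qed
    then show ?thesis using i that by blast
  qed
  then have "i \<noteq> k" by auto
  show ?thesis
  proof (cases "i < k")
    case True
    have "stable_mat (submatrix A {i,k} {i,k})" using stable_2[OF A True ik(2)] ik assms(3) by blast
    moreover have "card {i,k} = 2" "{i,k} \<subseteq> {..<n}" using True ik by auto
    ultimately show ?thesis by blast
  next
    case False
    then have "k < i" using \<open>i \<noteq> k\<close> by simp
    moreover have "A $$ (k,k) * A $$ (i,i) - A $$ (k,i) * A $$ (i,k) > 0" using ik(3) by (simp add: mult.commute)
    then have "stable_mat (submatrix A {k,i} {k,i})" using stable_2[OF A \<open>k < i\<close> ik(1)] ik assms(3) \<open>k < i\<close> by blast
    moreover have "card {k,i} = 2" "{k,i} \<subseteq> {..<n}" using \<open>k < i\<close> ik by auto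
    ultimately show ?thesis by blast
  qed
qed

end
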